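(* Let $N\ge2$. Let $Z_1,\dots,Z_N,V$ be independent random variables, where $V$ has Beta distribution with parameters $(1/(N-1),1)$ and each $Z_i$ has Gamma distribution with shape $1/(N-1)$ and scale $1$. Let $Z$ and $U=(U_1,\dots,U_N)$ be independent, with $Z$ Gamma distributed with shape $1/(N-1)$ and scale $1$, and $U$ Dirichlet distributed with parameters $(1/(N-1),\dots,1/(N-1))$. Then $(ZU_1,\dots,ZU_N)$ and $(VZ_1,\dots,VZ_N)$ have the same distribution. *)

theory Defs
  imports "HOL-Probability.Probability"
begin

definition gamma_density :: "real \<Rightarrow> real \<Rightarrow> real" where
  "gamma_density a x = (if 0 < x then x powr (a - 1) * exp (- x) / Gamma a else 0)"

definition beta_density :: "real \<Rightarrow> real \<Rightarrow> real \<Rightarrow> real" where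
  "beta_density a b x =
     (if 0 < x \<and> x < 1 then x powr (a - 1) * (1 - x) powr (b - 1) / Beta a b else 0)"

text \<open>As usual it is given by the density of the first N-1
  coordinates on the open simplex (w.r.t. Lebesgue measure), the last coordinate
  being 1 minus the sum of the others.\<close>
definition dirichlet_density :: "nat \<Rightarrow> (nat \<Rightarrow> real) \<Rightarrow> (nat \<Rightarrow> real) \<Rightarrow> real" where
  "dirichlet_density N alpha u =
     (let v = (\<lambda>i. if i < N - 1 then u i else 1 - (\<Sum>j<N - 1. u j)) in
      if (\<forall>i<N. 0 < v i)
      then Gamma (\<Sum>i<N. alpha i) / (\<Prod>i<N. Gamma (alpha i)) * (\<Prod>i<N. v i powr (alpha i - 1))
      else 0)"

definition dirichlet_measure :: "nat \<Rightarrow> (nat \<Rightarrow> real) \<Rightarrow> (nat \<Rightarrow> real) measure" where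
  "dirichlet_measure N alpha =
     distr (density (PiM {..<N - 1} (\<lambda>_. lborel)) (\<lambda>u. ennreal (dirichlet_density N alpha u)))
           (PiM {..<N} (\<lambda>_. borel))
           (\<lambda>u. \<lambda>i\<in>{..<N}. if i < N - 1 then u i else 1 - (\<Sum>j<N - 1. u j))"

end

theory Submission
  imports Defs
begin



lemma scale_PiM_lborel:
  fixes I :: "'i set"
  assumes "finite I" "0 < c"
    and "f \<in> borel_measurable (PiM I (\<lambda>_. lborel))"
  shows "(\<integral>\<^sup>+x. f (\<lambda>i\<in>I. c * x i) \<partial>PiM I (\<lambda>_. lborel))
         = ennreal (1 / c ^ card I) * (\<integral>\<^sup>+x. f x \<partial>PiM I (\<lambda>_. lborel))"
  using assms(1,3)
proof (induction I arbitrary: f rule: finite_induct)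
  case empty
  then show ?case by (simp add: PiM_empty nn_integral_count_space_finite)
next
  case (insert i I)
  interpret P: product_sigma_finite "\<lambda>_. lborel" by standard
  interpret PI: sigma_finite_measure "PiM I (\<lambda>_. lborel)"
    using P.sigma_finite insert.hyps(1) by blast
  note fm[measurable] = insert.prems
  have c: "0 < c" by fact
  have "(\<integral>\<^sup>+x. f (\<lambda>j\<in>insert i I. c * x j) \<partial>PiM (insert i I) (\<lambda>_. lborel))
     = (\<integral>\<^sup>+ y. (\<integral>\<^sup>+ x. f (\<lambda>j\<in>insert i I. c * (x(i:=y)) j) \<partial>PiM I (\<lambda>_. lborel)) \<partial>lborel)"
    using insert.hyps by (subst P.product_nn_integral_insert_rev) auto
  also have "\<dots> = (\<integral>\<^sup>+ y. (\<integral>\<^sup>+ x. (\<lambda>x'. f (x'(i := c * y))) (\<lambda>j\<in>I. c * x j) \<partial>PiM I (\<lambda>_. lborel)) \<partial>lborel)"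
  proof (intro nn_integral_cong arg_cong[where f=f])
    fix y :: real and x :: "'i \<Rightarrow> real" assume "x \<in> space (PiM I (\<lambda>_. lborel))"
    then show "(\<lambda>j\<in>insert i I. c * (x(i:=y)) j) = (\<lambda>x'. x'(i := c * y)) (\<lambda>j\<in>I. c * x j)"
      using insert.hyps by (auto simp: space_PiM PiE_def extensional_def fun_eq_iff)
  qed
  also have "\<dots> = (\<integral>\<^sup>+ y. ennreal (1 / c ^ card I) * (\<integral>\<^sup>+ x. f (x(i := c * y)) \<partial>PiM I (\<lambda>_. lborel)) \<partial>lborel)"
    by (intro nn_integral_cong insert.IH) measurable
  also have "\<dots> = ennreal (1 / c ^ card I) * (\<integral>\<^sup>+ y. (\<lambda>y. \<integral>\<^sup>+ x. f (x(i := y)) \<partial>PiM I (\<lambda>_. lborel)) (0 + c * y) \<partial>lborel)"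
    by (subst nn_integral_cmult) (auto intro!: PI.borel_measurable_nn_integral)
  also have "\<dots> = ennreal (1 / c ^ card I) * (ennreal (1 / c) * (\<integral>\<^sup>+ y. (\<integral>\<^sup>+ x. f (x(i := y)) \<partial>PiM I (\<lambda>_. lborel)) \<partial>lborel))"
    using c by (subst nn_integral_real_affine[where c=c and t=0])
       (auto intro!: PI.borel_measurable_nn_integral simp: mult.assoc[symmetric] ennreal_mult'[symmetric] simp del: ennreal_mult')
  also have "\<dots> = ennreal (1 / c ^ card (insert i I)) * (\<integral>\<^sup>+x. f x \<partial>PiM (insert i I) (\<lambda>_. lborel))"
    using insert.hyps c by (subst P.product_nn_integral_insert_rev)
       (auto simp: mult.assoc[symmetric] ennreal_mult'[symmetric] mult.commute)
  finally show ?case .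
qed

lemma PiM_density_nn:
  fixes I :: "'i set" and g :: "real \<Rightarrow> ennreal"
  assumes "finite I" and gm[measurable]: "g \<in> borel_measurable borel"
    and sf: "sigma_finite_measure (density lborel g)"
    and "h \<in> borel_measurable (PiM I (\<lambda>_. lborel))"
  shows "(\<integral>\<^sup>+x. h x \<partial>PiM I (\<lambda>_. density lborel g))
         = (\<integral>\<^sup>+x. (\<Prod>i\<in>I. g (x i)) * h x \<partial>PiM I (\<lambda>_. lborel))"
  using assms(1,4)
proof (induction I arbitrary: h rule: finite_induct)
  case empty
  then show ?case by (simp add: PiM_empty nn_integral_count_space_finite)
next
  case (insert i I)
  interpret P: product_sigma_finite "\<lambda>_. lborel" by standard
  interpret D: product_sigma_finite "\<lambda>_. density lborel g"
    unfolding product_sigma_finite_def using sf by blast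
  interpret DI: sigma_finite_measure "PiM I (\<lambda>_. density lborel g)"
    using D.sigma_finite insert.hyps(1) by blast
  interpret PI: sigma_finite_measure "PiM I (\<lambda>_. lborel)"
    using P.sigma_finite insert.hyps(1) by blast

  have sI: "sets (PiM I (\<lambda>_. density lborel g)) = sets (PiM I (\<lambda>_. lborel))"
    by (intro sets_PiM_cong) auto
  have sI': "sets (PiM (insert i I) (\<lambda>_. density lborel g)) = sets (PiM (insert i I) (\<lambda>_. lborel))"
    by (intro sets_PiM_cong) auto
  note hm[measurable] = insert.prems
  have hm': "h \<in> borel_measurable (PiM (insert i I) (\<lambda>_. density lborel g))"
    using hm by (simp add: measurable_cong_sets[OF sI' refl])
  have "(\<integral>\<^sup>+x. h x \<partial>PiM (insert i I) (\<lambda>_. density lborel g))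
      = (\<integral>\<^sup>+x. (\<integral>\<^sup>+y. h (x(i:=y)) \<partial>density lborel g) \<partial>PiM I (\<lambda>_. density lborel g))"
    using insert.hyps hm' by (subst D.product_nn_integral_insert) auto
  also have "\<dots> = (\<integral>\<^sup>+x. (\<integral>\<^sup>+y. g y * h (x(i:=y)) \<partial>lborel) \<partial>PiM I (\<lambda>_. density lborel g))"
    by (intro nn_integral_cong, subst nn_integral_density) (auto simp: space_PiM)
  also have "\<dots> = (\<integral>\<^sup>+x. (\<Prod>j\<in>I. g (x j)) * (\<integral>\<^sup>+y. g y * h (x(i:=y)) \<partial>lborel) \<partial>PiM I (\<lambda>_. lborel))"
    by (rule insert.IH, rule lborel.borel_measurable_nn_integral) measurable
  also have "\<dots> = (\<integral>\<^sup>+x. (\<integral>\<^sup>+y. (\<Prod>j\<in>insert i I. g ((x(i:=y)) j)) * h (x(i:=y)) \<partial>lborel) \<partial>PiM I (\<lambda>_. lborel))"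
  proof (intro nn_integral_cong)
    fix x :: "'i \<Rightarrow> real" assume x: "x \<in> space (PiM I (\<lambda>_. lborel))"
    have e: "(\<Prod>j\<in>insert i I. g ((x(i:=y)) j)) = g y * (\<Prod>j\<in>I. g (x j))" for y
      using insert.hyps by (subst prod.insert) (auto intro!: prod.cong arg_cong2[where f="(*)"])
    have m: "(\<lambda>y. h (x(i:=y))) \<in> borel_measurable lborel"
      using measurable_comp[OF measurable_component_update[OF x insert.hyps(2)] hm]
      by (simp add: comp_def)
    show "(\<Prod>j\<in>I. g (x j)) * (\<integral>\<^sup>+y. g y * h (x(i:=y)) \<partial>lborel)
        = (\<integral>\<^sup>+y. (\<Prod>j\<in>insert i I. g ((x(i:=y)) j)) * h (x(i:=y)) \<partial>lborel)"
      unfolding e using m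
      by (subst nn_integral_cmult[symmetric]) (auto simp: mult_ac)
  qed
  also have "\<dots> = (\<integral>\<^sup>+x. (\<Prod>i\<in>insert i I. g (x i)) * h x \<partial>PiM (insert i I) (\<lambda>_. lborel))"
    using insert.hyps by (subst P.product_nn_integral_insert) auto
  finally show ?case .
qed


lemma lim_exp_right0:
  fixes s :: real assumes "0 < s"
  shows "((\<lambda>v. exp (- s / v) / s) \<longlongrightarrow> 0) (at_right 0)"
proof -
  have 1: "filterlim (\<lambda>v. s * inverse v) at_top (at_right (0::real))"
    by (rule filterlim_tendsto_pos_mult_at_top[OF tendsto_const assms filterlim_inverse_at_top_right])
  have 2: "filterlim (\<lambda>v. - (s * inverse v)) at_bot (at_right (0::real))"
    using 1 by (simp add: filterlim_uminus_at_bot)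
  have 3: "((\<lambda>v. exp (- (s * inverse v))) \<longlongrightarrow> 0) (at_right (0::real))"
    by (rule filterlim_compose[OF exp_at_bot 2])
  then have "((\<lambda>v. exp (- (s * inverse v)) / s) \<longlongrightarrow> 0) (at_right (0::real))"
    by (rule tendsto_divide_zero)
  then show ?thesis by (simp add: divide_inverse)
qed

lemma key_integral:
  fixes s :: real assumes s: "0 < s"
  shows "(\<integral>\<^sup>+v. ennreal (exp (- s / v) / v ^ 2) * indicator {0<..<1} v \<partial>lborel) = ennreal (exp (- s) / s)"
proof -
  define F where "F v = (if v \<le> 0 then 0 else exp (- s / v) / s)" for v :: real
  define G where "G v = exp (- s / v) / s" for v :: real
  have FG: "\<forall>\<^sub>F v in nhds x. F v = G v" if "0 < x" for x
  proof -
    have "\<forall>\<^sub>F v in nhds x. v \<in> {0<..}"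
      using eventually_nhds_in_open[of "{0<..}" x] that by auto
    then show ?thesis by eventually_elim (auto simp: F_def G_def)
  qed
  have derG: "(G has_real_derivative exp (- s / v) / v ^ 2) (at v)" if "0 < v" for v
    unfolding G_def using that s
    by (auto intro!: derivative_eq_intros simp: field_simps power2_eq_square)
  have derF: "(F has_real_derivative exp (- s / v) / v ^ 2) (at v)" if "0 < v" for v
  proof -
    have "(G has_real_derivative exp (- s / v) / v ^ 2) (at v)" by (rule derG[OF that])
    then show ?thesis
      by (rule has_field_derivative_transform_within_open[where S="{0<..}"]) (use that in \<open>auto simp: F_def G_def\<close>)
  qed
  have cont: "continuous_on {0..1} F"
    unfolding continuous_on_def
  proof
    fix x :: real assume x: "x \<in> {0..1}"
    show "(F \<longlongrightarrow> F x) (at x within {0..1})"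
    proof (cases "x = 0")
      case True
      have "(F \<longlongrightarrow> 0) (at_right 0)"
      proof (rule Lim_transform_eventually[OF lim_exp_right0[OF s]])
        show "\<forall>\<^sub>F v in at_right 0. exp (- s / v) / s = F v"
          using eventually_at_right_less[of "0::real"] by eventually_elim (simp add: F_def)
      qed
      then show ?thesis using True
        by (simp add: at_within_Icc_at_right F_def)
    next
      case False
      then have "0 < x" using x by auto
      have "isCont G x" using derG[OF \<open>0 < x\<close>] by (rule DERIV_isCont)
      then have "(G \<longlongrightarrow> G x) (at x)" by (simp add: isCont_def)
      then have "(F \<longlongrightarrow> G x) (at x)"
        by (rule Lim_transform_eventually) (use FG[OF \<open>0 < x\<close>] in \<open>auto simp: eventually_at_filter elim: eventually_mono\<close>)
      then have "(F \<longlongrightarrow> F x) (at x)" using \<open>0 < x\<close> by (simp add: F_def G_def)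
      then show ?thesis by (rule tendsto_within_subset) simp
    qed
  qed
  have hi: "((\<lambda>v. exp (- s / v) / v ^ 2) has_integral (F 1 - F 0)) {0..1}"
    by (rule fundamental_theorem_of_calculus_interior[OF _ cont])
       (use derF in \<open>auto simp: has_real_derivative_iff_has_vector_derivative[symmetric]\<close>)
  have "(\<integral>\<^sup>+v. ennreal (exp (- s / v) / v ^ 2) * indicator {0..1} v \<partial>lborel) = ennreal (F 1 - F 0)"
    by (rule nn_integral_has_integral_lebesgue'[OF _ hi]) auto
  also have "F 1 - F 0 = exp (- s) / s" by (simp add: F_def)
  also have "(\<integral>\<^sup>+v. ennreal (exp (- s / v) / v ^ 2) * indicator {0..1} v \<partial>lborel)
      = (\<integral>\<^sup>+v. ennreal (exp (- s / v) / v ^ 2) * indicator {0<..<1} v \<partial>lborel)"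
    by (intro nn_integral_cong_AE, use AE_lborel_singleton[of 0] AE_lborel_singleton[of 1] in eventually_elim)
       (auto simp: indicator_def)
  finally show ?thesis .
qed


lemma powr_combine:
  fixes t b :: real and m k :: nat assumes "0 < t"
  shows "t powr b / t ^ m / (t powr b) ^ k = t powr (b - real m - b * real k)"
  using assms
  by (simp add: powr_diff powr_realpow[symmetric] powr_powr[symmetric] powr_power mult.commute)

lemma Gamma_pos': "0 < (x::real) \<Longrightarrow> 0 < Gamma x"
  by (rule Gamma_real_pos)

lemma Beta_a1: "0 < (a::real) \<Longrightarrow> Beta a 1 = 1 / a"
proof -
  assume a: "0 < a"
  have g: "Gamma (1 + a) = a * Gamma a" using Gamma_plus1[of a] a nonpos_Ints_nonpos[of a] by (force simp: add.commute)
  have "Gamma a \<noteq> 0" using Gamma_pos'[OF a] by simp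
  then show ?thesis using a by (simp add: Beta_def g field_simps)
qed


lemma prod_gamma_pos:
  fixes a v :: real and y :: "nat \<Rightarrow> real" and I :: "nat set"
  assumes "finite I" "0 < v" "\<forall>i\<in>I. 0 < y i"
  shows "(\<Prod>i\<in>I. gamma_density a (y i / v))
       = (\<Prod>i\<in>I. y i powr (a - 1)) / (v powr (a - 1)) ^ card I * exp (- (\<Sum>i\<in>I. y i) / v) / Gamma a ^ card I"
proof -
  have "(\<Prod>i\<in>I. gamma_density a (y i / v)) = (\<Prod>i\<in>I. y i powr (a - 1) / v powr (a - 1) * exp (- (y i / v)) / Gamma a)"
    using assms by (intro prod.cong) (auto simp: gamma_density_def powr_divide)
  also have "\<dots> = (\<Prod>i\<in>I. y i powr (a - 1)) / (\<Prod>i\<in>I. v powr (a - 1)) * (\<Prod>i\<in>I. exp (- (y i / v))) / (\<Prod>i\<in>I. Gamma a)"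
    by (simp add: prod.distrib prod_dividef power_mult_distrib)
  also have "(\<Prod>i\<in>I. exp (- (y i / v))) = exp (- (\<Sum>i\<in>I. y i) / v)"
    using assms(1) by (simp add: exp_sum[symmetric] sum_negf sum_divide_distrib)
  finally show ?thesis by (simp add: power_mult_distrib)
qed

lemma rhs_pointwise_pos:
  fixes n :: nat and v :: real and y :: "nat \<Rightarrow> real"
  assumes n: "0 < n" and y: "\<forall>i<Suc n. 0 < y i" and v: "0 < v" "v < 1"
  shows "beta_density (1 / real n) 1 v / v ^ Suc n * (\<Prod>i<Suc n. gamma_density (1 / real n) (y i / v))
    = ((1 / real n) / Gamma (1 / real n) ^ Suc n * (\<Prod>i<Suc n. y i powr (1 / real n - 1)))
      * (exp (- (\<Sum>i<Suc n. y i) / v) / v ^ 2)"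
proof -
  define a where "a = 1 / real n"
  have a: "0 < a" using n by (simp add: a_def)
  have an: "a * real n = 1" using n by (simp add: a_def)
  have g: "0 < Gamma a" using a by (rule Gamma_pos')
  have beta: "beta_density a 1 v = a * v powr (a - 1)"
    using v a by (simp add: beta_density_def Beta_a1)
  have pc: "v powr (a - 1) / v ^ Suc n / (v powr (a - 1)) ^ Suc n = 1 / v ^ 2"
  proof -
    have "v powr (a - 1) / v ^ Suc n / (v powr (a - 1)) ^ Suc n = v powr ((a - 1) - real (Suc n) - (a - 1) * real (Suc n))"
      using v by (intro powr_combine) auto
    also have "(a - 1) - real (Suc n) - (a - 1) * real (Suc n) = - 2"
      using an by (simp add: algebra_simps)
    also have "v powr (- 2) = 1 / v ^ 2"
      using v by (simp add: powr_minus powr_realpow divide_inverse)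
    finally show ?thesis .
  qed
  have "beta_density a 1 v / v ^ Suc n * (\<Prod>i<Suc n. gamma_density a (y i / v))
     = a * v powr (a - 1) / v ^ Suc n * ((\<Prod>i<Suc n. y i powr (a - 1)) / (v powr (a - 1)) ^ Suc n
         * exp (- (\<Sum>i<Suc n. y i) / v) / Gamma a ^ Suc n)"
    using v y by (subst prod_gamma_pos) (auto simp: beta)
  also have "\<dots> = a / Gamma a ^ Suc n * (\<Prod>i<Suc n. y i powr (a - 1))
       * exp (- (\<Sum>i<Suc n. y i) / v) * (v powr (a - 1) / v ^ Suc n / (v powr (a - 1)) ^ Suc n)"
    by (simp only: divide_inverse mult_ac inverse_mult_distrib)
  also have "\<dots> = (a / Gamma a ^ Suc n * (\<Prod>i<Suc n. y i powr (a - 1))) * (exp (- (\<Sum>i<Suc n. y i) / v) / v ^ 2)"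
    by (subst pc) (simp only: divide_inverse mult_ac mult_1_left mult_1_right)
  finally show ?thesis unfolding a_def .
qed



definition Fd :: "nat \<Rightarrow> (nat \<Rightarrow> real) \<Rightarrow> real" where
  "Fd n x = (if \<forall>i<Suc n. 0 < x i
     then (1 / real n) / Gamma (1 / real n) ^ Suc n * (\<Prod>i<Suc n. x i powr (1 / real n - 1))
          * (exp (- (\<Sum>i<Suc n. x i)) / (\<Sum>i<Suc n. x i))
     else 0)"

lemma Fd_nonneg: "0 < n \<Longrightarrow> 0 \<le> Fd n x"
proof (cases "\<forall>i<Suc n. 0 < x i")
  case True
  assume n: "0 < n"
  have "0 < (\<Sum>i<Suc n. x i)" using True by (intro sum_pos) auto
  then show ?thesis using Gamma_pos'[of "1 / real n"] n True
    unfolding Fd_def if_P[OF True]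
    by (intro mult_nonneg_nonneg divide_nonneg_nonneg prod_nonneg) (auto intro: less_imp_le)
next
  case False
  then show ?thesis unfolding Fd_def if_not_P[OF False] by simp
qed

lemma rhs_kernel:
  fixes n :: nat and y :: "nat \<Rightarrow> real"
  assumes n: "0 < n"
  shows "(\<integral>\<^sup>+v. ennreal (beta_density (1 / real n) 1 v / v ^ Suc n * (\<Prod>i<Suc n. gamma_density (1 / real n) (y i / v))) \<partial>lborel)
       = ennreal (Fd n y)"
proof (cases "\<forall>i<Suc n. 0 < y i")
  case True
  define C where "C = (1 / real n) / Gamma (1 / real n) ^ Suc n * (\<Prod>i<Suc n. y i powr (1 / real n - 1))"
  define s where "s = (\<Sum>i<Suc n. y i)"
  have s: "0 < s" unfolding s_def using True by (intro sum_pos) auto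
  have C: "0 \<le> C" unfolding C_def using Gamma_pos'[of "1 / real n"] n
    by (auto intro!: mult_nonneg_nonneg divide_nonneg_nonneg prod_nonneg)
  have "(\<integral>\<^sup>+v. ennreal (beta_density (1 / real n) 1 v / v ^ Suc n * (\<Prod>i<Suc n. gamma_density (1 / real n) (y i / v))) \<partial>lborel)
      = (\<integral>\<^sup>+v. ennreal C * (ennreal (exp (- s / v) / v ^ 2) * indicator {0<..<1} v) \<partial>lborel)"
  proof (intro nn_integral_cong)
    fix v :: real
    show "ennreal (beta_density (1 / real n) 1 v / v ^ Suc n * (\<Prod>i<Suc n. gamma_density (1 / real n) (y i / v)))
        = ennreal C * (ennreal (exp (- s / v) / v ^ 2) * indicator {0<..<1} v)"
    proof (cases "0 < v \<and> v < 1")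
      case True
      then show ?thesis using rhs_pointwise_pos[OF n \<open>\<forall>i<Suc n. 0 < y i\<close>, of v] C
        by (simp add: C_def s_def ennreal_mult'[symmetric] indicator_def)
    next
      case False
      then show ?thesis by (auto simp: beta_density_def indicator_def)
    qed
  qed
  also have "\<dots> = ennreal C * ennreal (exp (- s) / s)"
    using key_integral[OF s] by (subst nn_integral_cmult) auto
  also have "\<dots> = ennreal (Fd n y)"
    using True C s by (simp add: Fd_def C_def s_def ennreal_mult'[symmetric])
  finally show ?thesis .
next
  case False
  then obtain j where j: "j < Suc n" "y j \<le> 0" by auto
  have z: "ennreal (beta_density (1 / real n) 1 v / v ^ Suc n * (\<Prod>i<Suc n. gamma_density (1 / real n) (y i / v))) = 0" for v
    proof (cases "0 < v \<and> v < 1")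
      case True
      then have "gamma_density (1 / real n) (y j / v) = 0"
        using j by (auto simp: gamma_density_def divide_nonpos_pos zero_less_divide_iff)
      then have "(\<Prod>i<Suc n. gamma_density (1 / real n) (y i / v)) = 0"
        using j by (intro prod_zero) auto
      then show ?thesis by (simp only: mult_zero_right ennreal_0)
    next
      case False
      then show ?thesis by (auto simp: beta_density_def)
    qed
  show ?thesis unfolding Fd_def if_not_P[OF False] by (simp only: z) simp
qed


lemma dd_cong:
  assumes "\<And>i. i < n \<Longrightarrow> u i = u' i"
  shows "dirichlet_density (Suc n) alpha u = dirichlet_density (Suc n) alpha u'"
proof -
  have "(\<lambda>i. if i < n then u i else 1 - (\<Sum>j<n. u j)) = (\<lambda>i. if i < n then u' i else 1 - (\<Sum>j<n. u' j))"
    using assms by (auto intro!: sum.cong)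
  then show ?thesis by (simp only: dirichlet_density_def diff_Suc_1)
qed

lemma lhs_pointwise:
  fixes n :: nat and x :: "nat \<Rightarrow> real"
  assumes n: "0 < n"
  shows "gamma_density (1 / real n) (\<Sum>i<Suc n. x i) / (\<Sum>i<Suc n. x i) ^ n
      * dirichlet_density (Suc n) (\<lambda>_. 1 / real n) (\<lambda>i. x i / (\<Sum>i<Suc n. x i)) = Fd n x"
proof -
  define a where "a = 1 / real n"
  define z where "z = (\<Sum>i<Suc n. x i)"
  have a: "0 < a" using n by (simp add: a_def)
  have an: "a * real n = 1" using n by (simp add: a_def)
  have g: "0 < Gamma a" using a by (rule Gamma_pos')
  show ?thesis
  proof (cases "0 < z")
    case False
    have "\<not> (\<forall>i<Suc n. 0 < x i)"
    proof
      assume "\<forall>i<Suc n. 0 < x i"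
      then have "0 < z" unfolding z_def by (intro sum_pos) auto
      with False show False by simp
    qed
    then have Fd0: "Fd n x = 0" unfolding Fd_def by (rule if_not_P)
    have g0: "gamma_density a z = 0" using False by (simp add: gamma_density_def)
    show ?thesis unfolding z_def[symmetric] a_def[symmetric] using g0 Fd0 by simp
  next
    case True
    define v where "v = (\<lambda>i. if i < Suc n - 1 then x i / z else 1 - (\<Sum>j<Suc n - 1. x j / z))"
    have v: "v i = x i / z" if "i < Suc n" for i
    proof (cases "i < n")
      case False
      then have "i = n" using that by simp
      have "1 - (\<Sum>j<n. x j / z) = (z - (\<Sum>j<n. x j)) / z"
        using True by (simp add: sum_divide_distrib[symmetric] field_simps)
      also have "z - (\<Sum>j<n. x j) = x n" by (simp add: z_def)
      finally show ?thesis using \<open>i = n\<close> by (simp add: v_def)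
    qed (simp add: v_def)
    have pos: "(\<forall>i<Suc n. 0 < v i) \<longleftrightarrow> (\<forall>i<Suc n. 0 < x i)"
      using v True by (auto simp: zero_less_divide_iff)
    have dd: "dirichlet_density (Suc n) (\<lambda>_. a) (\<lambda>i. x i / z)
        = (if \<forall>i<Suc n. 0 < v i then Gamma (\<Sum>i<Suc n. a) / (\<Prod>i<Suc n. Gamma a) * (\<Prod>i<Suc n. v i powr (a - 1)) else 0)"
      unfolding dirichlet_density_def v_def Let_def by simp
    show ?thesis
    proof (cases "\<forall>i<Suc n. 0 < x i")
      case False
      then have Fd0: "Fd n x = 0" unfolding Fd_def by (rule if_not_P)
      have "\<not> (\<forall>i<Suc n. 0 < v i)" using pos False by simp
      then have d0: "dirichlet_density (Suc n) (\<lambda>_. a) (\<lambda>i. x i / z) = 0"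
        unfolding dd by (rule if_not_P)
      show ?thesis unfolding z_def[symmetric] a_def[symmetric] using d0 Fd0 by simp
    next
      case allpos: True
      have sg: "Gamma (\<Sum>i<Suc n. a) = a * Gamma a"
      proof -
        have "(\<Sum>i<Suc n. a) = a + 1" using an by (simp add: algebra_simps)
        then show ?thesis using Gamma_plus1[of a] a nonpos_Ints_nonpos[of a] by force
      qed
      have pv: "(\<Prod>i<Suc n. v i powr (a - 1)) = (\<Prod>i<Suc n. x i powr (a - 1)) / (z powr (a - 1)) ^ Suc n"
      proof -
        have "(\<Prod>i<Suc n. v i powr (a - 1)) = (\<Prod>i<Suc n. x i powr (a - 1) / z powr (a - 1))"
          using allpos True by (intro prod.cong) (auto simp: v powr_divide less_imp_le)
        then show ?thesis by (simp add: prod_dividef)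
      qed
      have pc: "z powr (a - 1) / z ^ n / (z powr (a - 1)) ^ Suc n = 1 / z"
      proof -
        have "z powr (a - 1) / z ^ n / (z powr (a - 1)) ^ Suc n = z powr ((a - 1) - real n - (a - 1) * real (Suc n))"
          using True by (intro powr_combine) auto
        also have "(a - 1) - real n - (a - 1) * real (Suc n) = - 1"
          using an by (simp add: algebra_simps)
        also have "z powr (- 1) = 1 / z"
          using True by (simp add: powr_minus divide_inverse)
        finally show ?thesis .
      qed
      have "gamma_density a z / z ^ n * dirichlet_density (Suc n) (\<lambda>_. a) (\<lambda>i. x i / z)
          = z powr (a - 1) * exp (- z) / Gamma a / z ^ n * (a * Gamma a / Gamma a ^ Suc n
             * ((\<Prod>i<Suc n. x i powr (a - 1)) / (z powr (a - 1)) ^ Suc n))"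
        using pos allpos unfolding dd sg pv gamma_density_def if_P[OF True] by simp
      also have "\<dots> = a / Gamma a ^ Suc n * (\<Prod>i<Suc n. x i powr (a - 1)) * exp (- z)
          * (z powr (a - 1) / z ^ n / (z powr (a - 1)) ^ Suc n)"
        using g by (simp add: field_simps)
      also have "\<dots> = Fd n x"
        unfolding pc Fd_def if_P[OF allpos] z_def[symmetric] a_def[symmetric] by (simp add: divide_inverse mult_ac)
      finally show ?thesis unfolding z_def[symmetric] a_def[symmetric] .
    qed
  qed
qed



lemma all_lessThan_eq: "(\<forall>i<(N::nat). P i) \<longleftrightarrow> (\<forall>i\<in>{..<N}. P i)" by auto

lemma gamma_density_measurable[measurable]: "gamma_density a \<in> borel_measurable borel"
  unfolding gamma_density_def by measurable

lemma beta_density_measurable[measurable]: "beta_density a b \<in> borel_measurable borel"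
  unfolding beta_density_def by measurable

lemma dd_measurable[measurable (raw)]:
  assumes [measurable]: "\<And>i. (\<lambda>x. U x i) \<in> borel_measurable M"
  shows "(\<lambda>x. dirichlet_density N alpha (U x)) \<in> borel_measurable M"
  unfolding dirichlet_density_def Let_def all_lessThan_eq by measurable

lemma Fd_measurable[measurable]: "Fd n \<in> borel_measurable (PiM {..<Suc n} (\<lambda>_. lborel))"
  unfolding Fd_def all_lessThan_eq by measurable


lemma rhs_nn:
  fixes n :: nat and f :: "(nat \<Rightarrow> real) \<Rightarrow> ennreal"
  assumes n: "0 < n" and fm[measurable]: "f \<in> borel_measurable (PiM {..<Suc n} (\<lambda>_. lborel))"
  shows "(\<integral>\<^sup>+v. ennreal (beta_density (1 / real n) 1 v) *
            (\<integral>\<^sup>+x. (\<Prod>i\<in>{..<Suc n}. ennreal (gamma_density (1 / real n) (x i))) * f (\<lambda>i\<in>{..<Suc n}. v * x i)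
              \<partial>PiM {..<Suc n} (\<lambda>_. lborel)) \<partial>lborel)
       = (\<integral>\<^sup>+x. ennreal (Fd n x) * f x \<partial>PiM {..<Suc n} (\<lambda>_. lborel))"
proof -
  define a where "a = 1 / real n"
  let ?I = "{..<Suc n}"
  let ?P = "PiM {..<Suc n} (\<lambda>_. lborel::real measure)"
  interpret PP: product_sigma_finite "\<lambda>_. lborel::real measure" by standard
  interpret PS: sigma_finite_measure ?P using PP.sigma_finite by blast
  interpret LP: pair_sigma_finite lborel ?P by standard
  have gnn: "0 \<le> gamma_density a t" for t
    unfolding gamma_density_def using Gamma_pos'[of a] n by (auto simp: a_def)
  have bnn: "0 \<le> beta_density a 1 t" for t
    unfolding beta_density_def using Beta_a1[of a] n by (auto simp: a_def)
  define k where "k v y = beta_density a 1 v / v ^ Suc n * (\<Prod>i\<in>?I. gamma_density a (y i / v))" for v y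
  have k_nn: "0 \<le> k v y" if "0 < v" for v y
    unfolding k_def using that gnn bnn by (auto intro!: mult_nonneg_nonneg divide_nonneg_nonneg prod_nonneg)
  have step1: "ennreal (beta_density a 1 v) *
      (\<integral>\<^sup>+x. (\<Prod>i\<in>?I. ennreal (gamma_density a (x i))) * f (\<lambda>i\<in>?I. v * x i) \<partial>?P)
      = (\<integral>\<^sup>+y. ennreal (k v y) * f y \<partial>?P)" for v
  proof (cases "0 < v \<and> v < 1")
    case False
    then have "beta_density a 1 v = 0" by (auto simp: beta_density_def)
    then show ?thesis by (simp add: k_def)
  next
    case True
    define H where "H y = ennreal (\<Prod>i\<in>?I. gamma_density a (y i / v)) * f y" for y
    have Hm[measurable]: "H \<in> borel_measurable ?P" unfolding H_def by measurable
    have "(\<integral>\<^sup>+x. (\<Prod>i\<in>?I. ennreal (gamma_density a (x i))) * f (\<lambda>i\<in>?I. v * x i) \<partial>?P)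
        = (\<integral>\<^sup>+x. H (\<lambda>i\<in>?I. v * x i) \<partial>?P)"
    proof (intro nn_integral_cong)
      fix x assume "x \<in> space ?P"
      have "(\<Prod>i\<in>?I. ennreal (gamma_density a (x i))) = ennreal (\<Prod>i\<in>?I. gamma_density a (x i))"
        using gnn by (intro prod_ennreal) auto
      also have "(\<Prod>i\<in>?I. gamma_density a (x i)) = (\<Prod>i\<in>?I. gamma_density a ((\<lambda>i\<in>?I. v * x i) i / v))"
        using True by (intro prod.cong) auto
      finally show "(\<Prod>i\<in>?I. ennreal (gamma_density a (x i))) * f (\<lambda>i\<in>?I. v * x i) = H (\<lambda>i\<in>?I. v * x i)"
        by (simp add: H_def)
    qed
    also have "\<dots> = ennreal (1 / v ^ card ?I) * (\<integral>\<^sup>+x. H x \<partial>?P)"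
      using True Hm by (intro scale_PiM_lborel) auto
    finally have "ennreal (beta_density a 1 v) *
      (\<integral>\<^sup>+x. (\<Prod>i\<in>?I. ennreal (gamma_density a (x i))) * f (\<lambda>i\<in>?I. v * x i) \<partial>?P)
      = ennreal (beta_density a 1 v) * ennreal (1 / v ^ Suc n) * (\<integral>\<^sup>+x. H x \<partial>?P)"
      by (simp add: mult.assoc)
    also have "\<dots> = (\<integral>\<^sup>+y. ennreal (beta_density a 1 v) * ennreal (1 / v ^ Suc n) * H y \<partial>?P)"
      by (subst nn_integral_cmult) auto
    also have "\<dots> = (\<integral>\<^sup>+y. ennreal (k v y) * f y \<partial>?P)"
    proof (intro nn_integral_cong)
      fix y
      show "ennreal (beta_density a 1 v) * ennreal (1 / v ^ Suc n) * H y = ennreal (k v y) * f y"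
      proof -
        have e: "ennreal (k v y) = ennreal (beta_density a 1 v) * ennreal (1 / v ^ Suc n) * ennreal (\<Prod>i\<in>?I. gamma_density a (y i / v))"
          unfolding k_def using True bnn gnn
          by (simp add: ennreal_mult[symmetric] prod_nonneg)
        show ?thesis unfolding e H_def by (simp add: mult.assoc)
      qed
    qed
    finally show ?thesis .
  qed
  have "(\<integral>\<^sup>+v. ennreal (beta_density a 1 v) *
            (\<integral>\<^sup>+x. (\<Prod>i\<in>?I. ennreal (gamma_density a (x i))) * f (\<lambda>i\<in>?I. v * x i) \<partial>?P) \<partial>lborel)
      = (\<integral>\<^sup>+v. (\<integral>\<^sup>+y. ennreal (k v y) * f y \<partial>?P) \<partial>lborel)"
    by (rule nn_integral_cong) (rule step1)
  also have "\<dots> = (\<integral>\<^sup>+y. (\<integral>\<^sup>+v. ennreal (k v y) * f y \<partial>lborel) \<partial>?P)"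
    by (rule LP.Fubini'[symmetric]) (unfold k_def, measurable)
  also have "\<dots> = (\<integral>\<^sup>+y. ennreal (Fd n y) * f y \<partial>?P)"
  proof (intro nn_integral_cong)
    fix y
    have "(\<integral>\<^sup>+v. ennreal (k v y) * f y \<partial>lborel) = (\<integral>\<^sup>+v. ennreal (k v y) \<partial>lborel) * f y"
      by (rule nn_integral_multc) (unfold k_def, measurable)
    also have "(\<integral>\<^sup>+v. ennreal (k v y) \<partial>lborel) = ennreal (Fd n y)"
      unfolding k_def a_def by (rule rhs_kernel[OF n])
    finally show "(\<integral>\<^sup>+v. ennreal (k v y) * f y \<partial>lborel) = ennreal (Fd n y) * f y" .
  qed
  finally show ?thesis by (simp add: a_def)
qed


lemma dd_nonneg:
  assumes a: "0 < a" shows "0 \<le> dirichlet_density (Suc n) (\<lambda>_. a) u"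
proof -
  have G1: "0 < Gamma (\<Sum>i<Suc n. a)" using a by (intro Gamma_pos') (simp add: sum_pos)
  have G2: "0 < (\<Prod>i<Suc n. Gamma a)" using a by (intro prod_pos) (simp add: Gamma_pos')
  show ?thesis unfolding dirichlet_density_def Let_def
    by (split if_split, intro conjI impI mult_nonneg_nonneg divide_nonneg_nonneg prod_nonneg)
       (use G1 G2 Gamma_pos'[OF a] in \<open>auto intro: less_imp_le\<close>)
qed

lemma Sh_measurable:
  "(\<lambda>(z, y). \<lambda>i\<in>{..<Suc n}. if i < n then y i else z - (\<Sum>j<n. y j))
     \<in> measurable (lborel \<Otimes>\<^sub>M PiM {..<n} (\<lambda>_. lborel)) (PiM {..<Suc n} (\<lambda>_. lborel))"
proof -
  have "(\<lambda>x. (case x of (z, y) \<Rightarrow> if i < n then y i else z - (\<Sum>j<n. y j)))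
     \<in> borel_measurable (lborel \<Otimes>\<^sub>M PiM {..<n} (\<lambda>_. lborel))" for i
  proof (cases "i < n")
    case True
    then show ?thesis by simp measurable
  next
    case False
    then show ?thesis by simp measurable
  qed
  then have "(\<lambda>x. \<lambda>i\<in>{..<Suc n}. (case x of (z, y) \<Rightarrow> if i < n then y i else z - (\<Sum>j<n. y j)))
     \<in> measurable (lborel \<Otimes>\<^sub>M PiM {..<n} (\<lambda>_. lborel)) (PiM {..<Suc n} (\<lambda>_. lborel))"
    by (intro measurable_restrict) simp
  also have "(\<lambda>x. \<lambda>i\<in>{..<Suc n}. (case x of (z, y) \<Rightarrow> if i < n then y i else z - (\<Sum>j<n. y j)))
     = (\<lambda>(z, y). \<lambda>i\<in>{..<Suc n}. if i < n then y i else z - (\<Sum>j<n. y j))"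
    by (auto simp: fun_eq_iff)
  finally show ?thesis .
qed


lemma lhs_nn:
  fixes n :: nat and f :: "(nat \<Rightarrow> real) \<Rightarrow> ennreal"
  assumes n: "0 < n" and fm[measurable]: "f \<in> borel_measurable (PiM {..<Suc n} (\<lambda>_. lborel))"
  shows "(\<integral>\<^sup>+z. ennreal (gamma_density (1 / real n) z) *
      (\<integral>\<^sup>+u. ennreal (dirichlet_density (Suc n) (\<lambda>_. 1 / real n) u)
         * f (\<lambda>i\<in>{..<Suc n}. z * (if i < n then u i else 1 - (\<Sum>j<n. u j))) \<partial>PiM {..<n} (\<lambda>_. lborel)) \<partial>lborel)
    = (\<integral>\<^sup>+x. ennreal (Fd n x) * f x \<partial>PiM {..<Suc n} (\<lambda>_. lborel))"
proof -
  define a where "a = 1 / real n"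
  have a: "0 < a" using n by (simp add: a_def)
  let ?Q = "PiM {..<n} (\<lambda>_. lborel::real measure)"
  let ?P = "PiM {..<Suc n} (\<lambda>_. lborel::real measure)"
  define Sh where "Sh z y = (\<lambda>i\<in>{..<Suc n}. if i < n then y i else z - (\<Sum>j<n. y j))" for z :: real and y :: "nat \<Rightarrow> real"
  define D where "D u = dirichlet_density (Suc n) (\<lambda>_. a) u" for u
  define g where "g z y = gamma_density a z / z ^ n * D (\<lambda>i. y i / z)" for z y
  interpret PP: product_sigma_finite "\<lambda>_. lborel::real measure" by standard
  interpret QS: sigma_finite_measure ?Q using PP.sigma_finite by blast
  interpret LQ: pair_sigma_finite lborel ?Q by standard
  have Shm[measurable]: "(\<lambda>(z, y). Sh z y) \<in> measurable (lborel \<Otimes>\<^sub>M ?Q) ?P"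
    unfolding Sh_def by (rule Sh_measurable)
  have Shm1[measurable]: "Sh z \<in> measurable ?Q ?P" for z
    using measurable_Pair2[OF Shm, of z] by simp
  have Dm[measurable]: "(\<lambda>(z, y). D (\<lambda>i. y i / z)) \<in> borel_measurable (lborel \<Otimes>\<^sub>M ?Q)"
  proof -
    have "(\<lambda>x. D (\<lambda>i. snd x i / fst x)) \<in> borel_measurable (lborel \<Otimes>\<^sub>M ?Q)"
      unfolding D_def
    proof (rule dd_measurable)
      fix i
      show "(\<lambda>x. snd x i / fst x) \<in> borel_measurable (lborel \<Otimes>\<^sub>M ?Q)"
      proof (cases "i < n")
        case True
        have "fst \<in> borel_measurable (lborel \<Otimes>\<^sub>M ?Q)"
          using measurable_fst[of lborel ?Q] by simp
        then show ?thesis apply measurable using True by auto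
      next
        case False
        have "(\<lambda>x. undefined / fst x :: real) \<in> borel_measurable (lborel \<Otimes>\<^sub>M ?Q)"
          by measurable
        moreover have "snd x i / fst x = undefined / fst x" if "x \<in> space (lborel \<Otimes>\<^sub>M ?Q)" for x
          using that False by (auto simp: space_pair_measure space_PiM PiE_def extensional_def)
        ultimately show ?thesis using measurable_cong by (smt (verit))
      qed
    qed
    then show ?thesis by (simp add: split_beta')
  qed
  have Dm'[measurable]: "(\<lambda>x. D (\<lambda>i. snd x i / fst x)) \<in> borel_measurable (lborel \<Otimes>\<^sub>M ?Q)"
    using Dm by (simp add: split_beta')
  have Dm1[measurable]: "(\<lambda>y. D (\<lambda>i. y i / z)) \<in> borel_measurable ?Q" for z
    using measurable_Pair2[OF Dm, of z] by simp
  have Shm'[measurable]: "(\<lambda>x. Sh (fst x) (snd x)) \<in> measurable (lborel \<Otimes>\<^sub>M ?Q) ?P"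
    using Shm by (simp add: split_beta')
  have Gm: "(\<lambda>x. ennreal (g (fst x) (snd x)) * f (Sh (fst x) (snd x))) \<in> borel_measurable (lborel \<Otimes>\<^sub>M ?Q)"
    unfolding g_def by measurable
  have Gm1: "(\<lambda>z. ennreal (g z y) * f (Sh z y)) \<in> borel_measurable borel" if "y \<in> space ?Q" for y
    using measurable_Pair1[OF Gm that] by simp
  have gnn: "0 \<le> gamma_density a t" for t
    unfolding gamma_density_def using Gamma_pos'[of a] a by auto
  have Dnn: "0 \<le> D u" for u unfolding D_def by (rule dd_nonneg[OF a])
  have gznn: "0 \<le> g z y" for z y
  proof (cases "0 < z")
    case True then show ?thesis unfolding g_def using gnn Dnn by auto
  next
    case False then show ?thesis by (simp add: g_def gamma_density_def)
  qed
  have step1: "ennreal (gamma_density a z) *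
      (\<integral>\<^sup>+u. ennreal (D u) * f (\<lambda>i\<in>{..<Suc n}. z * (if i < n then u i else 1 - (\<Sum>j<n. u j))) \<partial>?Q)
    = (\<integral>\<^sup>+y. ennreal (g z y) * f (Sh z y) \<partial>?Q)" for z
  proof (cases "0 < z")
    case False
    then show ?thesis by (simp add: g_def gamma_density_def)
  next
    case True
    define H where "H y = ennreal (D (\<lambda>i. y i / z)) * f (Sh z y)" for y
    have Hm[measurable]: "H \<in> borel_measurable ?Q"
      unfolding H_def by measurable
    have "(\<integral>\<^sup>+u. ennreal (D u) * f (\<lambda>i\<in>{..<Suc n}. z * (if i < n then u i else 1 - (\<Sum>j<n. u j))) \<partial>?Q)
        = (\<integral>\<^sup>+u. H (\<lambda>i\<in>{..<n}. z * u i) \<partial>?Q)"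
    proof (intro nn_integral_cong)
      fix u assume "u \<in> space ?Q"
      have e1: "D (\<lambda>i. (\<lambda>i\<in>{..<n}. z * u i) i / z) = D u"
        unfolding D_def using True by (intro dd_cong) auto
      have e2: "Sh z (\<lambda>i\<in>{..<n}. z * u i) = (\<lambda>i\<in>{..<Suc n}. z * (if i < n then u i else 1 - (\<Sum>j<n. u j)))"
        unfolding Sh_def by (auto simp: fun_eq_iff sum_distrib_left[symmetric] algebra_simps)
      show "ennreal (D u) * f (\<lambda>i\<in>{..<Suc n}. z * (if i < n then u i else 1 - (\<Sum>j<n. u j)))
          = H (\<lambda>i\<in>{..<n}. z * u i)"
        unfolding H_def e1 e2 ..
    qed
    also have "\<dots> = ennreal (1 / z ^ card {..<n}) * (\<integral>\<^sup>+y. H y \<partial>?Q)"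
      using True Hm by (intro scale_PiM_lborel) auto
    also have "ennreal (gamma_density a z) * (ennreal (1 / z ^ card {..<n}) * (\<integral>\<^sup>+y. H y \<partial>?Q))
        = (\<integral>\<^sup>+y. ennreal (gamma_density a z) * ennreal (1 / z ^ n) * H y \<partial>?Q)"
      by (subst nn_integral_cmult) (auto simp: mult.assoc)
    also have "\<dots> = (\<integral>\<^sup>+y. ennreal (g z y) * f (Sh z y) \<partial>?Q)"
    proof (intro nn_integral_cong)
      fix y
      have e: "ennreal (g z y) = ennreal (gamma_density a z) * ennreal (1 / z ^ n) * ennreal (D (\<lambda>i. y i / z))"
        unfolding g_def using True gnn Dnn by (simp add: ennreal_mult[symmetric])
      show "ennreal (gamma_density a z) * ennreal (1 / z ^ n) * H y = ennreal (g z y) * f (Sh z y)"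
        unfolding e H_def by (simp add: mult.assoc)
    qed
    finally show ?thesis .
  qed
  have "(\<integral>\<^sup>+z. ennreal (gamma_density a z) *
      (\<integral>\<^sup>+u. ennreal (D u) * f (\<lambda>i\<in>{..<Suc n}. z * (if i < n then u i else 1 - (\<Sum>j<n. u j))) \<partial>?Q) \<partial>lborel)
      = (\<integral>\<^sup>+z. (\<integral>\<^sup>+y. ennreal (g z y) * f (Sh z y) \<partial>?Q) \<partial>lborel)"
    by (rule nn_integral_cong) (rule step1)
  also have "\<dots> = (\<integral>\<^sup>+y. (\<integral>\<^sup>+z. ennreal (g z y) * f (Sh z y) \<partial>lborel) \<partial>?Q)"
    by (rule LQ.Fubini'[symmetric]) (use Gm in \<open>simp add: split_beta'\<close>)
  also have "\<dots> = (\<integral>\<^sup>+y. (\<integral>\<^sup>+w. ennreal (Fd n (y(n := w))) * f (y(n := w)) \<partial>lborel) \<partial>?Q)"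
  proof (rule nn_integral_cong)
    fix y assume y: "y \<in> space ?Q"
    define s where "s = (\<Sum>j<n. y j)"
    have "(\<integral>\<^sup>+z. ennreal (g z y) * f (Sh z y) \<partial>lborel)
        = ennreal \<bar>1\<bar> * (\<integral>\<^sup>+w. ennreal (g (s + 1 * w) y) * f (Sh (s + 1 * w) y) \<partial>lborel)"
      using Gm1[OF y] by (intro nn_integral_real_affine) auto
    also have "\<dots> = (\<integral>\<^sup>+w. ennreal (Fd n (y(n := w))) * f (y(n := w)) \<partial>lborel)"
    proof -
      have "ennreal (g (s + w) y) * f (Sh (s + w) y) = ennreal (Fd n (y(n := w))) * f (y(n := w))" for w
      proof -
        have sum: "(\<Sum>i<Suc n. (y(n := w)) i) = s + w"
          by (simp add: s_def)
        have shy: "Sh (s + w) y = y(n := w)"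
          using y by (auto simp: Sh_def s_def fun_eq_iff space_PiM PiE_def extensional_def)
        have "g (s + w) y = gamma_density a (\<Sum>i<Suc n. (y(n := w)) i) / (\<Sum>i<Suc n. (y(n := w)) i) ^ n
            * dirichlet_density (Suc n) (\<lambda>_. a) (\<lambda>i. (y(n := w)) i / (\<Sum>i<Suc n. (y(n := w)) i))"
          unfolding sum g_def D_def by (intro arg_cong2[where f="(*)"] refl dd_cong) auto
        also have "\<dots> = Fd n (y(n := w))"
          unfolding a_def by (rule lhs_pointwise[OF n])
        finally show ?thesis by (simp add: shy)
      qed
      then show ?thesis by simp
    qed
    finally show "(\<integral>\<^sup>+z. ennreal (g z y) * f (Sh z y) \<partial>lborel)
        = (\<integral>\<^sup>+w. ennreal (Fd n (y(n := w))) * f (y(n := w)) \<partial>lborel)" .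
  qed
  also have "\<dots> = (\<integral>\<^sup>+x. ennreal (Fd n x) * f x \<partial>PiM (insert n {..<n}) (\<lambda>_. lborel))"
    by (rule PP.product_nn_integral_insert[symmetric]) (auto simp: lessThan_Suc[symmetric])
  also have "insert n {..<n} = {..<Suc n}" by auto
  finally show ?thesis by (simp only: a_def D_def)
qed



lemma distr_borel_lborel:
  "X \<in> borel_measurable M \<Longrightarrow> distr M borel X = distr M lborel X"
  by (rule measure_eqI) (auto simp: emeasure_distr)

lemma T_measurable:
  "(\<lambda>u. \<lambda>i\<in>{..<Suc n}. if i < n then u i else 1 - (\<Sum>j<n. u j))
     \<in> measurable (PiM {..<n} (\<lambda>_. lborel)) (PiM {..<Suc n} (\<lambda>_. borel))"
proof (rule measurable_restrict)
  fix i assume "i \<in> {..<Suc n}"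
  show "(\<lambda>u. if i < n then u i else 1 - (\<Sum>j<n. u j)) \<in> borel_measurable (PiM {..<n} (\<lambda>_. lborel))"
  proof (cases "i < n")
    case True then show ?thesis by simp measurable
  next
    case False then show ?thesis by simp measurable
  qed
qed

theorem lemma3:
  fixes M :: "'a measure" and N :: nat
    and Zs :: "nat \<Rightarrow> 'a \<Rightarrow> real" and V Z :: "'a \<Rightarrow> real"
    and U :: "'a \<Rightarrow> nat \<Rightarrow> real"
  assumes "prob_space M"
    and "N \<ge> 2"
    and "prob_space.indep_vars M (\<lambda>_. borel) (\<lambda>i. if i < N then Zs i else V) {..N}"
    and "distributed M lborel V (\<lambda>x. ennreal (beta_density (1 / (real N - 1)) 1 x))"
    and "\<And>i. i < N \<Longrightarrow> distributed M lborel (Zs i) (\<lambda>x. ennreal (gamma_density (1 / (real N - 1)) x))"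
    and "U \<in> measurable M (PiM {..<N} (\<lambda>_. borel))"
    and "prob_space.indep_set M {Z -` A \<inter> space M | A. A \<in> sets borel}
                              {U -` B \<inter> space M | B. B \<in> sets (PiM {..<N} (\<lambda>_. borel))}"
    and "distributed M lborel Z (\<lambda>x. ennreal (gamma_density (1 / (real N - 1)) x))"
    and "distr M (PiM {..<N} (\<lambda>_. borel)) U = dirichlet_measure N (\<lambda>_. 1 / (real N - 1))"
  shows "distr M (PiM {..<N} (\<lambda>_. borel)) (\<lambda>\<omega>. \<lambda>i\<in>{..<N}. Z \<omega> * U \<omega> i)
       = distr M (PiM {..<N} (\<lambda>_. borel)) (\<lambda>\<omega>. \<lambda>i\<in>{..<N}. V \<omega> * Zs i \<omega>)"
proof -
  interpret prob_space M by fact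
  define n where "n = N - 1"
  have Nn: "N = Suc n" and n: "0 < n" using assms(2) by (auto simp: n_def)
  have rN: "real N - 1 = real n" by (simp add: Nn)
  define a where "a = 1 / real n"
  let ?S = "PiM {..<Suc n} (\<lambda>_. borel :: real measure)"
  let ?L = "PiM {..<Suc n} (\<lambda>_. lborel :: real measure)"
  have sSL: "sets ?S = sets ?L" by (intro sets_PiM_cong) auto
  have aN: "1 / (real N - 1) = a" by (simp add: rN a_def)
  have Zsm[measurable]: "Zs i \<in> borel_measurable M" if "i < Suc n" for i
    using distributed_measurable[OF assms(5)[of i]] that by (simp add: Nn)
  have Vm[measurable]: "V \<in> borel_measurable M"
    using distributed_measurable[OF assms(4)] by simp
  have Zm[measurable]: "Z \<in> borel_measurable M"
    using distributed_measurable[OF assms(8)] by simp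
  have Um[measurable]: "U \<in> measurable M ?S" using assms(6) by (simp add: Nn)
  have Zsd: "distr M borel (Zs i) = density lborel (\<lambda>x. ennreal (gamma_density a x))" if "i < Suc n" for i
    using distributed_distr_eq_density[OF assms(5)[of i]] that Zsm[OF that]
    by (simp add: Nn aN distr_borel_lborel a_def)
  have Vd: "distr M borel V = density lborel (\<lambda>x. ennreal (beta_density a 1 x))"
    using distributed_distr_eq_density[OF assms(4)] by (simp add: aN distr_borel_lborel a_def)
  have Zd: "distr M borel Z = density lborel (\<lambda>x. ennreal (gamma_density a x))"
    using distributed_distr_eq_density[OF assms(8)] by (simp add: aN distr_borel_lborel a_def)
  have gsf: "sigma_finite_measure (density lborel (\<lambda>x. ennreal (gamma_density a x)))"
  proof -
    have "prob_space (distr M borel Z)" by (rule prob_space_distr) simp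
    then show ?thesis unfolding Zd by (rule prob_space_imp_sigma_finite)
  qed
  have RHS: "(\<integral>\<^sup>+x. f x \<partial>distr M ?S (\<lambda>\<omega>. \<lambda>i\<in>{..<Suc n}. V \<omega> * Zs i \<omega>))
      = (\<integral>\<^sup>+x. ennreal (Fd n x) * f x \<partial>?L)" if fm[measurable]: "f \<in> borel_measurable ?S" for f
  proof -
    define Y where "Y i = (if i < Suc n then Zs i else V)" for i
    define \<mu> where "\<mu> i = distr M borel (Y i)" for i
    define W where "W \<omega> = (\<lambda>i\<in>{..Suc n}. Y i \<omega>)" for \<omega>
    define G where "G w = (\<lambda>i\<in>{..<Suc n}. w (Suc n) * w i :: real)" for w :: "nat \<Rightarrow> real"
    have Ym[measurable]: "Y i \<in> borel_measurable M" for i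
      unfolding Y_def by auto
    have ind: "indep_vars (\<lambda>_. borel) Y {..Suc n}"
    proof -
      have "Y = (\<lambda>i. if i < Suc n then Zs i else V)" by (simp add: fun_eq_iff Y_def)
      then show ?thesis using assms(3) by (simp add: Nn)
    qed
    have Wd: "distr M (PiM {..Suc n} (\<lambda>_. borel)) W = PiM {..Suc n} \<mu>"
      using ind unfolding W_def \<mu>_def
      by (subst (asm) indep_vars_iff_distr_eq_PiM) auto
    interpret Pmu: product_sigma_finite \<mu>
      unfolding product_sigma_finite_def \<mu>_def
      by (auto intro!: prob_space_imp_sigma_finite prob_space_distr)
    have Wm[measurable]: "W \<in> measurable M (PiM {..Suc n} (\<lambda>_. borel))"
      unfolding W_def by measurable
    have Gm[measurable]: "G \<in> measurable (PiM {..Suc n} (\<lambda>_. borel)) ?S"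
      unfolding G_def by measurable
    have sPmu: "sets (PiM {..Suc n} \<mu>) = sets (PiM {..Suc n} (\<lambda>_. borel))"
      by (intro sets_PiM_cong) (auto simp: \<mu>_def)
    have fGm: "(\<lambda>w. f (G w)) \<in> borel_measurable (PiM (insert (Suc n) {..<Suc n}) \<mu>)"
    proof -
      have h: "(\<lambda>w. f (G w)) \<in> borel_measurable (PiM {..Suc n} (\<lambda>_. borel))" by measurable
      have e: "insert (Suc n) {..<Suc n} = {..Suc n}" by auto
      show ?thesis unfolding e measurable_cong_sets[OF sPmu refl] by (rule h)
    qed
    have \<mu>V: "\<mu> (Suc n) = density lborel (\<lambda>x. ennreal (beta_density a 1 x))"
      by (simp add: \<mu>_def Y_def Vd)
    have \<mu>Z: "PiM {..<Suc n} \<mu> = PiM {..<Suc n} (\<lambda>_. density lborel (\<lambda>x. ennreal (gamma_density a x)))"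
      by (intro PiM_cong) (auto simp: \<mu>_def Y_def Zsd)
    have "(\<integral>\<^sup>+x. f x \<partial>distr M ?S (\<lambda>\<omega>. \<lambda>i\<in>{..<Suc n}. V \<omega> * Zs i \<omega>))
        = (\<integral>\<^sup>+\<omega>. f (\<lambda>i\<in>{..<Suc n}. V \<omega> * Zs i \<omega>) \<partial>M)"
      by (subst nn_integral_distr) auto
    also have "\<dots> = (\<integral>\<^sup>+\<omega>. f (G (W \<omega>)) \<partial>M)"
      by (intro nn_integral_cong arg_cong[where f=f]) (auto simp: G_def W_def Y_def fun_eq_iff)
    also have "\<dots> = (\<integral>\<^sup>+w. f (G w) \<partial>distr M (PiM {..Suc n} (\<lambda>_. borel)) W)"
      by (subst nn_integral_distr) auto
    also have "\<dots> = (\<integral>\<^sup>+w. f (G w) \<partial>PiM (insert (Suc n) {..<Suc n}) \<mu>)"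
    proof -
      have "insert (Suc n) {..<Suc n} = {..Suc n}" by auto
      then show ?thesis by (simp add: Wd)
    qed
    also have "\<dots> = (\<integral>\<^sup>+v. (\<integral>\<^sup>+x. f (G (x(Suc n := v))) \<partial>PiM {..<Suc n} \<mu>) \<partial>\<mu> (Suc n))"
      using fGm by (subst Pmu.product_nn_integral_insert_rev) auto
    also have "\<dots> = (\<integral>\<^sup>+v. (\<integral>\<^sup>+x. f (\<lambda>i\<in>{..<Suc n}. v * x i)
          \<partial>PiM {..<Suc n} (\<lambda>_. density lborel (\<lambda>x. ennreal (gamma_density a x)))) \<partial>density lborel (\<lambda>x. ennreal (beta_density a 1 x)))"
      unfolding \<mu>V \<mu>Z
      by (intro nn_integral_cong arg_cong[where f=f]) (auto simp: G_def fun_eq_iff)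
    also have "\<dots> = (\<integral>\<^sup>+v. ennreal (beta_density a 1 v) * (\<integral>\<^sup>+x. (\<Prod>i\<in>{..<Suc n}. ennreal (gamma_density a (x i))) * f (\<lambda>i\<in>{..<Suc n}. v * x i)
          \<partial>?L) \<partial>lborel)"
    proof -
      have fL[measurable]: "f \<in> borel_measurable ?L" using fm measurable_cong_sets[OF sSL refl] by simp
      have inner: "(\<integral>\<^sup>+x. f (\<lambda>i\<in>{..<Suc n}. v * x i) \<partial>PiM {..<Suc n} (\<lambda>_. density lborel (\<lambda>x. ennreal (gamma_density a x))))
          = (\<integral>\<^sup>+x. (\<Prod>i\<in>{..<Suc n}. ennreal (gamma_density a (x i))) * f (\<lambda>i\<in>{..<Suc n}. v * x i) \<partial>?L)" for v
        by (rule PiM_density_nn) (auto intro: gsf)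
      have im: "(\<lambda>v. \<integral>\<^sup>+x. (\<Prod>i\<in>{..<Suc n}. ennreal (gamma_density a (x i))) * f (\<lambda>i\<in>{..<Suc n}. v * x i) \<partial>?L) \<in> borel_measurable lborel"
      proof -
        interpret PP: product_sigma_finite "\<lambda>_. lborel::real measure" by standard
        interpret PS: sigma_finite_measure ?L using PP.sigma_finite by blast
        show ?thesis by (rule PS.borel_measurable_nn_integral) measurable
      qed
      show ?thesis unfolding inner using im by (subst nn_integral_density) auto
    qed
    also have "\<dots> = (\<integral>\<^sup>+x. ennreal (Fd n x) * f x \<partial>?L)"
      unfolding a_def by (rule rhs_nn[OF n]) (use fm measurable_cong_sets[OF sSL refl] in simp)
    finally show ?thesis .
  qed
  have LHS: "(\<integral>\<^sup>+x. f x \<partial>distr M ?S (\<lambda>\<omega>. \<lambda>i\<in>{..<Suc n}. Z \<omega> * U \<omega> i))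
      = (\<integral>\<^sup>+x. ennreal (Fd n x) * f x \<partial>?L)" if fm[measurable]: "f \<in> borel_measurable ?S" for f
  proof -
    define G2 where "G2 p = (\<lambda>i\<in>{..<Suc n}. fst p * snd p i :: real)" for p :: "real \<times> (nat \<Rightarrow> real)"
    define T where "T u = (\<lambda>i\<in>{..<Suc n}. if i < n then u i else 1 - (\<Sum>j<n. u j) :: real)" for u :: "nat \<Rightarrow> real"
    define D where "D u = dirichlet_density (Suc n) (\<lambda>_. a) u" for u
    let ?Q = "PiM {..<n} (\<lambda>_. lborel::real measure)"
    have indZU: "prob ((Z -` A \<inter> space M) \<inter> (U -` B \<inter> space M)) = prob (Z -` A \<inter> space M) * prob (U -` B \<inter> space M)"
      if "A \<in> sets borel" "B \<in> sets ?S" for A B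
    proof -
      have "\<forall>a\<in>{Z -` A \<inter> space M | A. A \<in> sets borel}. \<forall>b\<in>{U -` B \<inter> space M | B. B \<in> sets ?S}. prob (a \<inter> b) = prob a * prob b"
        using assms(7) unfolding indep_sets2_eq Nn by blast
      then show ?thesis using that by blast
    qed
    have pair: "distr M (borel \<Otimes>\<^sub>M ?S) (\<lambda>x. (Z x, U x)) = distr M borel Z \<Otimes>\<^sub>M distr M ?S U"
    proof (rule pair_measure_eqI[symmetric])
      show "sigma_finite_measure (distr M borel Z)"
        by (intro prob_space_imp_sigma_finite prob_space_distr) simp
      show "sigma_finite_measure (distr M ?S U)"
        by (intro prob_space_imp_sigma_finite prob_space_distr) simp
      show "sets (distr M borel Z \<Otimes>\<^sub>M distr M ?S U) = sets (distr M (borel \<Otimes>\<^sub>M ?S) (\<lambda>x. (Z x, U x)))"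
        unfolding sets_distr by (intro sets_pair_measure_cong) auto
      fix A B assume A: "A \<in> sets (distr M borel Z)" and B: "B \<in> sets (distr M ?S U)"
      then have A': "A \<in> sets borel" and B': "B \<in> sets ?S" by auto
      have e: "(\<lambda>x. (Z x, U x)) -` (A \<times> B) \<inter> space M = (Z -` A \<inter> space M) \<inter> (U -` B \<inter> space M)"
        by auto
      have "emeasure (distr M (borel \<Otimes>\<^sub>M ?S) (\<lambda>x. (Z x, U x))) (A \<times> B)
          = emeasure M ((Z -` A \<inter> space M) \<inter> (U -` B \<inter> space M))"
        using A' B' by (subst emeasure_distr) (auto simp: e)
      also have "\<dots> = ennreal (prob (Z -` A \<inter> space M) * prob (U -` B \<inter> space M))"
        using A' B' by (simp add: emeasure_eq_measure indZU)
      also have "\<dots> = emeasure (distr M borel Z) A * emeasure (distr M ?S U) B"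
        using A' B' by (simp add: emeasure_distr emeasure_eq_measure ennreal_mult)
      finally show "emeasure (distr M borel Z) A * emeasure (distr M ?S U) B
          = emeasure (distr M (borel \<Otimes>\<^sub>M ?S) (\<lambda>x. (Z x, U x))) (A \<times> B)" by simp
    qed
    have Ud: "distr M ?S U = dirichlet_measure (Suc n) (\<lambda>_. a)"
      using assms(9) by (simp add: Nn a_def)
    interpret Us: sigma_finite_measure "distr M ?S U"
      by (intro prob_space_imp_sigma_finite prob_space_distr) simp
    have Tm[measurable]: "T \<in> measurable ?Q ?S"
      unfolding T_def by (rule T_measurable)
    have G2m[measurable]: "G2 \<in> measurable (borel \<Otimes>\<^sub>M ?S) ?S"
      unfolding G2_def by measurable
    have Dm[measurable]: "D \<in> borel_measurable ?Q"
    proof -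
      have h: "(\<lambda>u. D (\<lambda>i. if i < n then u i else 0)) \<in> borel_measurable ?Q"
        unfolding D_def
      proof (rule dd_measurable)
        fix i
        show "(\<lambda>u. if i < n then u i else 0) \<in> borel_measurable ?Q"
          by (cases "i < n") simp_all
      qed
      have eq: "D u = D (\<lambda>i. if i < n then u i else 0)" for u
        unfolding D_def by (rule dd_cong) simp
      have "(\<lambda>u. D (\<lambda>i. if i < n then u i else 0)) = D"
        by (rule ext) (rule eq[symmetric])
      with h show ?thesis by simp
    qed
    have dm: "dirichlet_measure (Suc n) (\<lambda>_. a) = distr (density ?Q (\<lambda>u. ennreal (D u))) ?S T"
      unfolding dirichlet_measure_def D_def T_def[abs_def] diff_Suc_1 ..
    have "(\<integral>\<^sup>+x. f x \<partial>distr M ?S (\<lambda>\<omega>. \<lambda>i\<in>{..<Suc n}. Z \<omega> * U \<omega> i))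
        = (\<integral>\<^sup>+\<omega>. f (\<lambda>i\<in>{..<Suc n}. Z \<omega> * U \<omega> i) \<partial>M)"
      by (subst nn_integral_distr) auto
    also have "\<dots> = (\<integral>\<^sup>+\<omega>. f (G2 (Z \<omega>, U \<omega>)) \<partial>M)"
      by (simp add: G2_def)
    also have "\<dots> = (\<integral>\<^sup>+p. f (G2 p) \<partial>distr M (borel \<Otimes>\<^sub>M ?S) (\<lambda>x. (Z x, U x)))"
      by (subst nn_integral_distr) auto
    also have "\<dots> = (\<integral>\<^sup>+p. f (G2 p) \<partial>(distr M borel Z \<Otimes>\<^sub>M distr M ?S U))"
      by (simp add: pair)
    also have "\<dots> = (\<integral>\<^sup>+z. (\<integral>\<^sup>+u. f (G2 (z, u)) \<partial>distr M ?S U) \<partial>distr M borel Z)"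
      by (rule Us.nn_integral_fst[symmetric]) simp
    also have "\<dots> = (\<integral>\<^sup>+z. ennreal (gamma_density a z) * (\<integral>\<^sup>+u. f (G2 (z, u)) \<partial>distr M ?S U) \<partial>lborel)"
      unfolding Zd by (subst nn_integral_density) (auto intro!: Us.borel_measurable_nn_integral)
    also have "\<dots> = (\<integral>\<^sup>+z. ennreal (gamma_density a z) *
        (\<integral>\<^sup>+u. ennreal (D u) * f (\<lambda>i\<in>{..<Suc n}. z * (if i < n then u i else 1 - (\<Sum>j<n. u j))) \<partial>?Q) \<partial>lborel)"
    proof (rule nn_integral_cong)
      fix z :: real
      have "(\<integral>\<^sup>+u. f (G2 (z, u)) \<partial>distr M ?S U) = (\<integral>\<^sup>+u. f (G2 (z, T u)) \<partial>density ?Q (\<lambda>u. ennreal (D u)))"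
        unfolding Ud dm by (subst nn_integral_distr) auto
      also have "\<dots> = (\<integral>\<^sup>+u. ennreal (D u) * f (G2 (z, T u)) \<partial>?Q)"
        by (subst nn_integral_density) auto
      also have "\<dots> = (\<integral>\<^sup>+u. ennreal (D u) * f (\<lambda>i\<in>{..<Suc n}. z * (if i < n then u i else 1 - (\<Sum>j<n. u j))) \<partial>?Q)"
        by (intro nn_integral_cong arg_cong2[where f="(*)"] arg_cong[where f=f] refl) (auto simp: G2_def T_def fun_eq_iff)
      finally show "ennreal (gamma_density a z) * (\<integral>\<^sup>+u. f (G2 (z, u)) \<partial>distr M ?S U)
          = ennreal (gamma_density a z) * (\<integral>\<^sup>+u. ennreal (D u) * f (\<lambda>i\<in>{..<Suc n}. z * (if i < n then u i else 1 - (\<Sum>j<n. u j))) \<partial>?Q)"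
        by simp
    qed
    also have "\<dots> = (\<integral>\<^sup>+x. ennreal (Fd n x) * f x \<partial>?L)"
      unfolding a_def D_def by (rule lhs_nn[OF n]) (use fm measurable_cong_sets[OF sSL refl] in simp)
    finally show ?thesis .
  qed
  show ?thesis
    unfolding Nn
  proof (rule measure_eqI)
    fix A assume A: "A \<in> sets (distr M ?S (\<lambda>\<omega>. \<lambda>i\<in>{..<Suc n}. Z \<omega> * U \<omega> i))"
    then have A': "A \<in> sets ?S" by simp
    have "emeasure (distr M ?S (\<lambda>\<omega>. \<lambda>i\<in>{..<Suc n}. Z \<omega> * U \<omega> i)) A
        = (\<integral>\<^sup>+x. indicator A x \<partial>distr M ?S (\<lambda>\<omega>. \<lambda>i\<in>{..<Suc n}. Z \<omega> * U \<omega> i))"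
      using A by (simp add: nn_integral_indicator)
    also have "\<dots> = (\<integral>\<^sup>+x. ennreal (Fd n x) * indicator A x \<partial>?L)"
      using A' by (intro LHS) simp
    also have "\<dots> = (\<integral>\<^sup>+x. indicator A x \<partial>distr M ?S (\<lambda>\<omega>. \<lambda>i\<in>{..<Suc n}. V \<omega> * Zs i \<omega>))"
      using A' by (intro RHS[symmetric]) simp
    also have "\<dots> = emeasure (distr M ?S (\<lambda>\<omega>. \<lambda>i\<in>{..<Suc n}. V \<omega> * Zs i \<omega>)) A"
      using A' by (simp add: nn_integral_indicator)
    finally show "emeasure (distr M ?S (\<lambda>\<omega>. \<lambda>i\<in>{..<Suc n}. Z \<omega> * U \<omega> i)) A
        = emeasure (distr M ?S (\<lambda>\<omega>. \<lambda>i\<in>{..<Suc n}. V \<omega> * Zs i \<omega>)) A" .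
  qed simp
qed


end
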